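(* Let $n\ge 5$, $k\ge 1$, and $0\le h\le n$. Let $\mathcal{G}^4_{n,h}$ be a graph obtained from $\mathcal{G}^4_n$ by deleting any $h$ of the $n$ links of the form $\{i,i+2 \pmod n\}$. Then $$\lceil h/2\rceil \;\le\; M^{\mathcal{G}^4_{n,h}}_{k,n}\;\le\; 2M^C_{k,\lceil n/2\rceil}+h+2 .$$
   Context: $\mathcal{G}^4_n$ is the graph on $\{1,\dots,n\}$ in which each node $i$ is adjacent to $i\pm1$ and $i\pm2\pmod n$. For a graph $G$ on $\{1,\dots,n\}$, a measurement matrix for $G$ is a matrix $A\in\{0,1\}^{m\times n}$ in which every nonzero row has a support that induces a connected subgraph of $G$. A vector is $k$-sparse if it has at most $k$ nonzero entries. $A$ identifies all $k$-sparse vectors if $Ax_1\ne Ax_2$ for every two distinct $k$-sparse $x_1,x_2\in\mathbb{R}^n$. $M^G_{k,n}$ is the minimum number of rows of a measurement matrix for $G$ that identifies all $k$-sparse vectors. $M^C_{k,N}$ is the minimum number of rows of an arbitrary $0$-$1$ matrix with $N$ columns that identifies all $k$-sparse vectors in $\mathbb{R}^N$. *)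

theory Defs
  imports Complex_Main
begin

text \<open>Graphs on the vertex set {1..n} are given by their edge sets (sets of 2-element sets).
 Vertex i+1 mod n (in the labelling 1..n) is (i mod n)+1, vertex i+2 mod n is ((i+1) mod n)+1.\<close>

definition skip2_links :: "nat \<Rightarrow> nat set set" where
  "skip2_links n = {{i, ((i + 1) mod n) + 1} | i. i \<in> {1..n}}"

definition G4 :: "nat \<Rightarrow> nat set set" where
  "G4 n = {{i, (i mod n) + 1} | i. i \<in> {1..n}} \<union> skip2_links n"

definition induces_connected :: "nat set set \<Rightarrow> nat set \<Rightarrow> bool" where
  "induces_connected Es S \<longleftrightarrow> S \<noteq> {} \<and>
     (\<forall>u\<in>S. \<forall>v\<in>S. (u, v) \<in> ({(a, b). a \<in> S \<and> b \<in> S \<and> {a, b} \<in> Es})\<^sup>*)"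

text \<open>A matrix with m rows (indexed 0..<m) and n columns (indexed 1..n); entries outside are irrelevant.\<close>
definition zero_one_matrix :: "nat \<Rightarrow> nat \<Rightarrow> (nat \<Rightarrow> nat \<Rightarrow> real) \<Rightarrow> bool" where
  "zero_one_matrix m n A \<longleftrightarrow> (\<forall>r<m. \<forall>j\<in>{1..n}. A r j \<in> {0, 1})"

definition row_support :: "nat \<Rightarrow> (nat \<Rightarrow> nat \<Rightarrow> real) \<Rightarrow> nat \<Rightarrow> nat set" where
  "row_support n A r = {j \<in> {1..n}. A r j \<noteq> 0}"

definition measurement_matrix :: "nat set set \<Rightarrow> nat \<Rightarrow> nat \<Rightarrow> (nat \<Rightarrow> nat \<Rightarrow> real) \<Rightarrow> bool" where
  "measurement_matrix Es m n A \<longleftrightarrow> zero_one_matrix m n A \<and>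
     (\<forall>r<m. row_support n A r \<noteq> {} \<longrightarrow> induces_connected Es (row_support n A r))"

text \<open>Vectors in R^n: functions nat => real vanishing outside {1..n}.\<close>
definition is_vec :: "nat \<Rightarrow> (nat \<Rightarrow> real) \<Rightarrow> bool" where
  "is_vec n x \<longleftrightarrow> (\<forall>j. j \<notin> {1..n} \<longrightarrow> x j = 0)"

definition sparse :: "nat \<Rightarrow> nat \<Rightarrow> (nat \<Rightarrow> real) \<Rightarrow> bool" where
  "sparse n k x \<longleftrightarrow> card {j \<in> {1..n}. x j \<noteq> 0} \<le> k"

definition mat_vec :: "nat \<Rightarrow> (nat \<Rightarrow> nat \<Rightarrow> real) \<Rightarrow> (nat \<Rightarrow> real) \<Rightarrow> nat \<Rightarrow> real" where
  "mat_vec n A x r = (\<Sum>j = 1..n. A r j * x j)"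

definition identifies :: "nat \<Rightarrow> nat \<Rightarrow> nat \<Rightarrow> (nat \<Rightarrow> nat \<Rightarrow> real) \<Rightarrow> bool" where
  "identifies m n k A \<longleftrightarrow>
     (\<forall>x1 x2. is_vec n x1 \<and> is_vec n x2 \<and> sparse n k x1 \<and> sparse n k x2 \<and> x1 \<noteq> x2 \<longrightarrow>
        (\<exists>r<m. mat_vec n A x1 r \<noteq> mat_vec n A x2 r))"

definition M_graph :: "nat set set \<Rightarrow> nat \<Rightarrow> nat \<Rightarrow> nat" where
  "M_graph Es k n = (LEAST m. \<exists>A. measurement_matrix Es m n A \<and> identifies m n k A)"

definition M_C :: "nat \<Rightarrow> nat \<Rightarrow> nat" where
  "M_C k N = (LEAST m. \<exists>A. zero_one_matrix m N A \<and> identifies m N k A)"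

end

theory Submission
  imports Defs
begin


definition prv :: "nat \<Rightarrow> nat \<Rightarrow> nat" where "prv n c = (if c = 1 then n else c - 1)"
definition nxt :: "nat \<Rightarrow> nat \<Rightarrow> nat" where "nxt n c = (if c = n then 1 else c + 1)"
definition L :: "nat \<Rightarrow> nat \<Rightarrow> nat set" where "L n c = {prv n c, nxt n c}"

lemma prv_aux:
  assumes "n \<ge> 3" "c \<in> {1..n}"
  shows "((prv n c + 1) mod n) + 1 = nxt n c \<and> prv n c \<in> {1..n}"
proof (cases "c = 1")
  case True
  have "(n+1) mod n = 1" using assms by (simp add: mod_Suc)
  then show ?thesis using True assms by (simp add: prv_def nxt_def)
next
  case False
  show ?thesis
  proof (cases "c = n")
    case True
    then show ?thesis using False assms by (simp add: prv_def nxt_def)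
  next
    case False2: False
    then have "c mod n = c" using assms by simp
    then show ?thesis using False False2 assms by (simp add: prv_def nxt_def; arith)
  qed
qed

lemma skip_aux:
  assumes "n \<ge> 3" "i \<in> {1..n}"
  shows "{i, ((i + 1) mod n) + 1} = L n (i mod n + 1) \<and> i mod n + 1 \<in> {1..n}"
proof (cases "i = n")
  case True
  have "(n+1) mod n = 1" using assms by (simp add: mod_Suc)
  then show ?thesis using True assms by (simp add: L_def prv_def nxt_def)
next
  case False
  then have "i < n" using assms by simp
  then show ?thesis using assms by (auto simp add: L_def prv_def nxt_def)
qed

lemma skip_eq:
  assumes "n \<ge> 3" shows "skip2_links n = L n ` {1..n}"
proof
  show "skip2_links n \<subseteq> L n ` {1..n}"
  proof
    fix e assume "e \<in> skip2_links n"
    then obtain i where i: "i \<in> {1..n}" "e = {i, ((i + 1) mod n) + 1}"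
      unfolding skip2_links_def by auto
    from skip_aux[OF assms i(1)] i(2) show "e \<in> L n ` {1..n}" by auto
  qed
next
  show "L n ` {1..n} \<subseteq> skip2_links n"
  proof
    fix e assume "e \<in> L n ` {1..n}"
    then obtain c where c: "c \<in> {1..n}" "e = L n c" by auto
    have "e = {prv n c, ((prv n c + 1) mod n) + 1} \<and> prv n c \<in> {1..n}"
      using c prv_aux[OF assms c(1)] by (simp add: L_def)
    then show "e \<in> skip2_links n" unfolding skip2_links_def by blast
  qed
qed


lemma L_inj: assumes "n \<ge> 5" shows "inj_on (L n) {1..n}"
proof
  fix a b assume a: "a \<in> {1..n}" and b: "b \<in> {1..n}" and e: "L n a = L n b"
  then show "a = b" using assms
    by (auto simp: L_def prv_def nxt_def doubleton_eq_iff split: if_splits)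
qed

lemma cyc_notF: assumes "n \<ge> 5" "1 \<le> i" "i < n" "F \<subseteq> skip2_links n" shows "{i, i+1} \<notin> F"
proof
  assume "{i, i+1} \<in> F"
  then have "{i, i+1} \<in> L n ` {1..n}" using assms skip_eq[of n] by auto
  then obtain c where c: "c \<in> {1..n}" "{i, i+1} = L n c" by auto
  then show False using assms
    by (auto simp: L_def prv_def nxt_def doubleton_eq_iff split: if_splits)
qed

lemma G4_eq: assumes "n \<ge> 3" shows "G4 n = (\<lambda>i. {i, nxt n i}) ` {1..n} \<union> L n ` {1..n}"
proof -
  have "\<And>i. i \<in> {1..n} \<Longrightarrow> (i mod n) + 1 = nxt n i" by (auto simp: nxt_def)
  then have "{{i, (i mod n) + 1} | i. i \<in> {1..n}} = (\<lambda>i. {i, nxt n i}) ` {1..n}"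
    by (auto simp: image_def)
  then show ?thesis unfolding G4_def skip_eq[OF assms] by simp
qed

lemma cyc_edge: assumes "1 \<le> i" "i < n" shows "{i, i+1} \<in> G4 n"
proof -
  have "i mod n + 1 = i + 1" using assms by simp
  then show ?thesis unfolding G4_def using assms by force
qed

lemma link_edge: assumes "1 \<le> i" "i + 2 \<le> n" shows "{i, i+2} \<in> G4 n"
proof -
  have "(i + 1) mod n + 1 = i + 2" using assms by simp
  then have "{i, i+2} \<in> skip2_links n" unfolding skip2_links_def using assms by force
  then show ?thesis unfolding G4_def by simp
qed

lemma cross_step:
  assumes "n \<ge> 5" "c1 < c2" "1 \<le> c1" "c2 \<le> n" "L n c1 \<in> F" "L n c2 \<in> F"
    "{a,b} \<in> G4 n" "{a,b} \<notin> F" "a \<in> {1..n}" "b \<in> {1..n}" "c1 < a" "a < c2" "b \<noteq> c1" "b \<noteq> c2"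
  shows "c1 < b \<and> b < c2"
proof -
  from assms(7) G4_eq[of n] assms(1) consider (cy) i where "i \<in> {1..n}" "{a,b} = {i, nxt n i}"
    | (lk) c where "c \<in> {1..n}" "{a,b} = L n c" by auto
  then show ?thesis
  proof cases
    case cy
    then show ?thesis using assms by (auto simp: nxt_def doubleton_eq_iff split: if_splits)
  next
    case lk
    have "c \<noteq> c1" "c \<noteq> c2" using lk assms by auto
    then show ?thesis using lk assms by (auto simp: L_def prv_def nxt_def doubleton_eq_iff split: if_splits)
  qed
qed



context
  fixes d :: "nat \<Rightarrow> nat" and S :: "nat set" and h :: nat
  assumes mono: "\<And>i j. i < j \<Longrightarrow> j < h \<Longrightarrow> d i < d j"
    and noalt: "\<And>c1 c2 u v. c1 < c2 \<Longrightarrow> c1 \<in> d ` {..<h} \<Longrightarrow> c2 \<in> d ` {..<h} \<Longrightarrow>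
        c1 \<notin> S \<Longrightarrow> c2 \<notin> S \<Longrightarrow> u \<in> S \<Longrightarrow> v \<in> S \<Longrightarrow> c1 < u \<Longrightarrow> u < c2 \<Longrightarrow> (v < c1 \<or> c2 < v) \<Longrightarrow> False"
begin

lemma cut_aux:
  assumes s: "s < s'" "s' < h"
  shows "\<not> (d s \<in> S \<and> d ((s+1) mod h) \<notin> S \<and> d s' \<in> S \<and> d ((s'+1) mod h) \<notin> S)"
    and "\<not> (d s \<notin> S \<and> d ((s+1) mod h) \<in> S \<and> d s' \<notin> S \<and> d ((s'+1) mod h) \<in> S)"
proof -
  have le: "\<And>i j. i \<le> j \<Longrightarrow> j < h \<Longrightarrow> d i \<le> d j"
    using mono by (metis le_eq_less_or_eq less_imp_le)
  have sh: "(s+1) mod h = s + 1" using s by simp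
  show "\<not> (d s \<in> S \<and> d ((s+1) mod h) \<notin> S \<and> d s' \<in> S \<and> d ((s'+1) mod h) \<notin> S)"
  proof
    assume H: "d s \<in> S \<and> d ((s+1) mod h) \<notin> S \<and> d s' \<in> S \<and> d ((s'+1) mod h) \<notin> S"
    have a1: "d s < d (s+1)" using mono s by simp
    have a2: "d (s+1) < d s'" using le[of "s+1" s'] s H sh by (metis le_eq_less_or_eq Suc_leI Suc_eq_plus1)
    show False
    proof (cases "s' + 1 < h")
      case True
      then have "(s'+1) mod h = s'+1" by simp
      moreover have "d s' < d (s'+1)" using mono True by simp
      ultimately show False
        using noalt[of "d (s+1)" "d (s'+1)" "d s'" "d s"] H sh a1 a2 True s by auto
    next
      case False
      then have "s'+1 = h" using s by linarith
      then have "(s'+1) mod h = 0" by simp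
      moreover have "d 0 < d s"
      proof -
        have "d 0 \<le> d s" using le[of 0 s] s by simp
        moreover have "d 0 \<noteq> d s" using H \<open>(s'+1) mod h = 0\<close> by auto
        ultimately show ?thesis by simp
      qed
      ultimately show False
        using noalt[of "d 0" "d (s+1)" "d s" "d s'"] H sh a1 a2 s by auto
    qed
  qed
  show "\<not> (d s \<notin> S \<and> d ((s+1) mod h) \<in> S \<and> d s' \<notin> S \<and> d ((s'+1) mod h) \<in> S)"
  proof
    assume H: "d s \<notin> S \<and> d ((s+1) mod h) \<in> S \<and> d s' \<notin> S \<and> d ((s'+1) mod h) \<in> S"
    have a1: "d s < d (s+1)" using mono s by simp
    have a2: "d (s+1) < d s'" using le[of "s+1" s'] s H sh by (metis le_eq_less_or_eq Suc_leI Suc_eq_plus1)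
    show False
    proof (cases "s' + 1 < h")
      case True
      then have "(s'+1) mod h = s'+1" by simp
      moreover have "d s' < d (s'+1)" using mono True by simp
      ultimately show False
        using noalt[of "d s" "d s'" "d (s+1)" "d (s'+1)"] H sh a1 a2 True s by auto
    next
      case False
      then have "s'+1 = h" using s by linarith
      then have "(s'+1) mod h = 0" by simp
      moreover have "d 0 < d s"
      proof -
        have "d 0 \<le> d s" using le[of 0 s] s by simp
        moreover have "d 0 \<noteq> d s" using H \<open>(s'+1) mod h = 0\<close> by auto
        ultimately show ?thesis by simp
      qed
      ultimately show False
        using noalt[of "d s" "d s'" "d (s+1)" "d 0"] H sh a1 a2 s by auto
    qed
  qed
qed

lemma card_cut:
  shows "card {s. s < h \<and> (d s \<in> S) \<noteq> (d ((s+1) mod h) \<in> S)} \<le> 2"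
proof -
  let ?C1 = "{s. s < h \<and> d s \<in> S \<and> d ((s+1) mod h) \<notin> S}"
  let ?C0 = "{s. s < h \<and> d s \<notin> S \<and> d ((s+1) mod h) \<in> S}"
  have eq: "{s. s < h \<and> (d s \<in> S) \<noteq> (d ((s+1) mod h) \<in> S)} = ?C1 \<union> ?C0" by auto
  have c1: "card ?C1 \<le> 1"
  proof -
    have "\<forall>a\<in>?C1. \<forall>b\<in>?C1. a = b"
    proof (intro ballI)
      fix a b assume a: "a \<in> ?C1" and b: "b \<in> ?C1"
      show "a = b"
      proof (rule ccontr)
        assume "a \<noteq> b"
        then consider "a < b" | "b < a" by linarith
        then show False
        proof cases
          case 1 then show False using cut_aux(1)[OF 1] a b by auto
        next
          case 2 then show False using cut_aux(1)[OF 2] a b by auto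
        qed
      qed
    qed
    then show ?thesis by (simp add: card_le_Suc0_iff_eq)
  qed
  have c0: "card ?C0 \<le> 1"
  proof -
    have "\<forall>a\<in>?C0. \<forall>b\<in>?C0. a = b"
    proof (intro ballI)
      fix a b assume a: "a \<in> ?C0" and b: "b \<in> ?C0"
      show "a = b"
      proof (rule ccontr)
        assume "a \<noteq> b"
        then consider "a < b" | "b < a" by linarith
        then show False
        proof cases
          case 1 then show False using cut_aux(2)[OF 1] a b by auto
        next
          case 2 then show False using cut_aux(2)[OF 2] a b by auto
        qed
      qed
    qed
    then show ?thesis by (simp add: card_le_Suc0_iff_eq)
  qed
  have "card (?C1 \<union> ?C0) \<le> card ?C1 + card ?C0" by (rule card_Un_le)
  then show ?thesis using eq c1 c0 by simp
qed

end



definition Rel :: "nat set set \<Rightarrow> nat set \<Rightarrow> (nat \<times> nat) set" where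
  "Rel Es S = {(a, b). a \<in> S \<and> b \<in> S \<and> {a, b} \<in> Es}"

lemma conn_Rel: "induces_connected Es S \<longleftrightarrow> S \<noteq> {} \<and> (\<forall>u\<in>S. \<forall>v\<in>S. (u, v) \<in> (Rel Es S)\<^sup>*)"
  unfolding induces_connected_def Rel_def by simp

lemma cross:
  assumes "n \<ge> 5" "c1 < c2" "1 \<le> c1" "c2 \<le> n" "L n c1 \<in> F" "L n c2 \<in> F"
    "S \<subseteq> {1..n}" "c1 \<notin> S" "c2 \<notin> S"
    and p: "(u, v) \<in> (Rel (G4 n - F) S)\<^sup>*" and "c1 < u" "u < c2"
  shows "c1 < v \<and> v < c2"
  using p
proof (induction rule: rtrancl_induct)
  case base then show ?case using assms by simp
next
  case (step b c)
  then have "b \<in> S" "c \<in> S" "{b, c} \<in> G4 n" "{b, c} \<notin> F" by (auto simp: Rel_def)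
  moreover have "c \<in> {1..n}" "b \<in> {1..n}" "c \<noteq> c1" "c \<noteq> c2" using assms \<open>c \<in> S\<close> \<open>b \<in> S\<close> by auto
  ultimately show ?case using cross_step[of n c1 c2 F b c] assms step(3) by blast
qed

lemma noalt:
  assumes "n \<ge> 5" "c1 < c2" "1 \<le> c1" "c2 \<le> n" "L n c1 \<in> F" "L n c2 \<in> F"
    "S \<subseteq> {1..n}" "c1 \<notin> S" "c2 \<notin> S" "induces_connected (G4 n - F) S"
    "u \<in> S" "v \<in> S" "c1 < u" "u < c2" "v < c1 \<or> c2 < v"
  shows False
proof -
  have "(u, v) \<in> (Rel (G4 n - F) S)\<^sup>*" using assms(10-12) by (simp add: conn_Rel)
  then show False using cross[OF assms(1-9)] assms(13-15) by force
qed

lemma col_distinct: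
  assumes "identifies m n k A" "k \<ge> 1" "a \<in> {1..n}" "b \<in> {1..n}" "a \<noteq> b"
  shows "\<exists>r<m. A r a \<noteq> A r b"
proof -
  define x1 where "x1 = (\<lambda>j. if j = a then (1::real) else 0)"
  define x2 where "x2 = (\<lambda>j. if j = b then (1::real) else 0)"
  have v: "is_vec n x1" "is_vec n x2" using assms by (auto simp: is_vec_def x1_def x2_def)
  have "{j \<in> {1..n}. x1 j \<noteq> 0} = {a}" "{j \<in> {1..n}. x2 j \<noteq> 0} = {b}"
    using assms by (auto simp: x1_def x2_def)
  then have sp: "sparse n k x1" "sparse n k x2" using assms by (auto simp: sparse_def)
  have ne: "x1 \<noteq> x2" using assms by (auto simp: x1_def x2_def fun_eq_iff)
  obtain r where r: "r < m" "mat_vec n A x1 r \<noteq> mat_vec n A x2 r"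
    using assms(1) v sp ne unfolding identifies_def by blast
  have "mat_vec n A x1 r = A r a" "mat_vec n A x2 r = A r b"
    using assms by (auto simp: mat_vec_def x1_def x2_def if_distrib sum.delta cong: if_cong)
  then show ?thesis using r by auto
qed

lemma m_pos:
  assumes "identifies m n k A" "k \<ge> 1" "n \<ge> 1"
  shows "m \<ge> 1"
proof -
  define x1 where "x1 = (\<lambda>j::nat. if j = 1 then (1::real) else 0)"
  define x2 where "x2 = (\<lambda>j::nat. (0::real))"
  have v: "is_vec n x1" "is_vec n x2" using assms by (auto simp: is_vec_def x1_def x2_def)
  have e1: "{j \<in> {1..n}. x1 j \<noteq> 0} = {1}" and e2: "{j \<in> {1..n}. x2 j \<noteq> 0} = {}"
    using assms by (auto simp: x1_def x2_def)
  have sp: "sparse n k x1" "sparse n k x2" unfolding sparse_def e1 e2 using assms by auto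
  have ne: "x1 \<noteq> x2" using assms by (auto simp: x1_def x2_def fun_eq_iff)
  obtain r where r: "r < m"
    using assms(1) v sp ne unfolding identifies_def by blast
  then show ?thesis by simp
qed

lemma lower:
  assumes n5: "n \<ge> 5" and k1: "k \<ge> 1" and FS: "F \<subseteq> skip2_links n" and cF: "card F = h"
    and MM: "measurement_matrix (G4 n - F) m n A" and ID: "identifies m n k A"
  shows "h \<le> 2 * m"
proof -
  define D where "D = {c \<in> {1..n}. L n c \<in> F}"
  have FD: "F = L n ` D" using skip_eq[of n] n5 FS by (auto simp: D_def)
  have finD: "finite D" by (simp add: D_def)
  have "inj_on (L n) D" using L_inj[OF n5] by (rule inj_on_subset) (auto simp: D_def)
  then have cD: "card D = h" using cF FD card_image by metis
  consider "h = 0" | "h = 1" | "h \<ge> 2" by linarith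
  then show ?thesis
  proof cases
    case 1 then show ?thesis by simp
  next
    case 2 then show ?thesis using m_pos[OF ID k1] n5 by simp
  next
    case 3
    define ds where "ds = sorted_list_of_set D"
    define d where "d = (\<lambda>s. ds ! s)"
    have lds: "length ds = h" using cD finD by (simp add: ds_def)
    have sds: "sorted_wrt (<) ds" by (simp add: ds_def strict_sorted_list_of_set)
    have mono: "\<And>i j. i < j \<Longrightarrow> j < h \<Longrightarrow> d i < d j"
      using sorted_wrt_nth_less[OF sds] lds by (simp add: d_def)
    have dD: "\<And>s. s < h \<Longrightarrow> d s \<in> D"
      using lds finD by (metis d_def ds_def nth_mem set_sorted_list_of_set)
    have dimg: "d ` {..<h} \<subseteq> D" using dD by auto
    define S where "S = (\<lambda>r. row_support n A r)"
    define C where "C = (\<lambda>r. {s. s < h \<and> (d s \<in> S r) \<noteq> (d ((s+1) mod h) \<in> S r)})"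
    have cC: "card (C r) \<le> 2" if r: "r < m" for r
    proof (cases "S r = {}")
      case True
      then show ?thesis by (simp add: C_def)
    next
      case False
      have conn: "induces_connected (G4 n - F) (S r)"
        using MM r False unfolding measurement_matrix_def S_def by blast
      have Ssub: "S r \<subseteq> {1..n}" by (auto simp: S_def row_support_def)
      show ?thesis unfolding C_def
      proof (rule card_cut[of h d "S r"])
        show "\<And>i j. i < j \<Longrightarrow> j < h \<Longrightarrow> d i < d j" by (rule mono)
      next
        fix c1 c2 u v
        assume H: "c1 < c2" "c1 \<in> d ` {..<h}" "c2 \<in> d ` {..<h}" "c1 \<notin> S r" "c2 \<notin> S r"
          "u \<in> S r" "v \<in> S r" "c1 < u" "u < c2" "v < c1 \<or> c2 < v"
        have "c1 \<in> D" "c2 \<in> D" using H dimg by auto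
        then have "1 \<le> c1" "c2 \<le> n" "L n c1 \<in> F" "L n c2 \<in> F" by (auto simp: D_def)
        then show False using noalt[OF n5 H(1) _ _ _ _ Ssub H(4,5) conn H(6-10)] by blast
      qed
    qed
    have cover: "{..<h} \<subseteq> (\<Union>r\<in>{..<m}. C r)"
    proof
      fix s assume s: "s \<in> {..<h}"
      have s1: "(s+1) mod h < h" using 3 by simp
      have ne: "d s \<noteq> d ((s+1) mod h)"
      proof
        assume eq: "d s = d ((s+1) mod h)"
        show False
        proof (cases "s + 1 < h")
          case True then show False using mono[of s "s+1"] eq by simp
        next
          case False
          then have "s + 1 = h" using s by simp
          then have "(s+1) mod h = 0" by simp
          moreover have "0 < s" using 3 \<open>s+1 = h\<close> by simp
          ultimately show False using mono[of 0 s] eq s by simp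
        qed
      qed
      have inn: "d s \<in> {1..n}" "d ((s+1) mod h) \<in> {1..n}" using dD s s1 by (auto simp: D_def)
      obtain r where r: "r < m" "A r (d s) \<noteq> A r (d ((s+1) mod h))"
        using col_distinct[OF ID k1 inn ne] by blast
      have z: "A r (d s) \<in> {0,1}" "A r (d ((s+1) mod h)) \<in> {0,1}"
        using MM r inn unfolding measurement_matrix_def zero_one_matrix_def by auto
      have "(d s \<in> S r) \<noteq> (d ((s+1) mod h) \<in> S r)"
        using r(2) z inn by (auto simp: S_def row_support_def)
      then show "s \<in> (\<Union>r\<in>{..<m}. C r)" using s r by (auto simp: C_def)
    qed
    have "h = card {..<h}" by simp
    also have "\<dots> \<le> card (\<Union>r\<in>{..<m}. C r)"
      by (rule card_mono[OF _ cover]) (auto simp: C_def)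
    also have "\<dots> \<le> (\<Sum>r\<in>{..<m}. card (C r))" by (rule card_UN_le) simp
    also have "\<dots> \<le> (\<Sum>r\<in>{..<m}. 2)" by (rule sum_mono) (simp add: cC)
    also have "\<dots> = 2 * m" by simp
    finally show ?thesis .
  qed
qed



lemma sym_Rel: "sym (Rel Es S)"
  unfolding Rel_def sym_def by (auto simp: insert_commute)

lemma conn_from_root:
  assumes "p \<in> S" "\<And>v. v \<in> S \<Longrightarrow> (p, v) \<in> (Rel Es S)\<^sup>*"
  shows "induces_connected Es S"
proof -
  have s: "sym ((Rel Es S)\<^sup>*)" by (rule sym_rtrancl[OF sym_Rel])
  have "(u, v) \<in> (Rel Es S)\<^sup>*" if "u \<in> S" "v \<in> S" for u v
  proof -
    have "(u, p) \<in> (Rel Es S)\<^sup>*" using assms(2)[OF that(1)] s by (meson symD)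
    then show ?thesis using assms(2)[OF that(2)] by (rule rtrancl_trans)
  qed
  then show ?thesis using assms(1) by (auto simp: conn_Rel)
qed

lemma edge_Rel: "a \<in> S \<Longrightarrow> b \<in> S \<Longrightarrow> {a,b} \<in> Es \<Longrightarrow> (a, b) \<in> (Rel Es S)\<^sup>*"
  by (auto simp: Rel_def)

definition Bset :: "nat \<Rightarrow> nat set set \<Rightarrow> nat set" where
  "Bset n F = (\<lambda>i. i + 1) ` {i. 1 \<le> i \<and> i + 2 \<le> n \<and> {i, i+2} \<in> F}"

definition Cls :: "nat \<Rightarrow> nat \<Rightarrow> nat set" where
  "Cls n p = {v \<in> {1..n}. v mod 2 = p mod 2}"

lemma card_Bset: assumes "finite F" shows "card (Bset n F) \<le> card F"
proof -
  let ?I = "{i. 1 \<le> i \<and> i + 2 \<le> n \<and> {i, i+2} \<in> F}"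
  have "card (Bset n F) \<le> card ?I" unfolding Bset_def
    by (rule card_image_le, rule finite_subset[of _ "{..n}"]) auto
  also have "card ?I \<le> card F"
  proof (rule card_inj_on_le[of "\<lambda>i. {i, i+2}"])
    show "inj_on (\<lambda>i. {i, i + 2}) ?I" by (auto simp: inj_on_def doubleton_eq_iff)
  qed (use assms in auto)
  finally show ?thesis .
qed

lemma Bset_sub: "Bset n F \<subseteq> {1..n}" by (auto simp: Bset_def)

lemma conn_class:
  assumes n5: "n \<ge> 5" and FS: "F \<subseteq> skip2_links n" and p: "p = 1 \<or> p = 2"
    and X: "X \<subseteq> {1..n}"
  shows "induces_connected (G4 n - F) (Cls n p \<union> Bset n F \<union> X)"
proof -
  let ?S = "Cls n p \<union> Bset n F \<union> X"
  let ?R = "Rel (G4 n - F) ?S"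
  have cyc: "(i, i+1) \<in> ?R\<^sup>*" "(i+1, i) \<in> ?R\<^sup>*" if "1 \<le> i" "i < n" "i \<in> ?S" "i+1 \<in> ?S" for i
  proof -
    have "{i, i+1} \<in> G4 n - F" using cyc_edge[of i n] cyc_notF[OF n5 _ _ FS, of i] that by auto
    then show "(i, i+1) \<in> ?R\<^sup>*" "(i+1, i) \<in> ?R\<^sup>*" using that edge_Rel[of _ ?S] by (auto simp: insert_commute)
  qed
  have pS: "p \<in> ?S" using p n5 by (auto simp: Cls_def)
  have chain: "p + 2*t \<le> n \<longrightarrow> (p, p + 2*t) \<in> ?R\<^sup>*" for t
  proof (induction t)
    case 0 then show ?case by simp
  next
    case (Suc t)
    show ?case
    proof
      assume le: "p + 2 * Suc t \<le> n"
      let ?i = "p + 2*t"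
      have prev: "(p, ?i) \<in> ?R\<^sup>*" using Suc le by simp
      have iS: "?i \<in> ?S" "?i + 2 \<in> ?S" using le p by (auto simp: Cls_def)
      have "(?i, ?i + 2) \<in> ?R\<^sup>*"
      proof (cases "{?i, ?i+2} \<in> F")
        case False
        then have "{?i, ?i+2} \<in> G4 n - F" using link_edge[of ?i n] le p by auto
        then show ?thesis using iS edge_Rel[of _ ?S] by blast
      next
        case True
        then have "?i + 1 \<in> Bset n F" unfolding Bset_def using le p by auto
        then have m: "?i + 1 \<in> ?S" by auto
        have "(?i, ?i+1) \<in> ?R\<^sup>*" using cyc(1)[of ?i] iS m le p by auto
        moreover have "(?i+1, ?i+1+1) \<in> ?R\<^sup>*" using cyc(1)[of "?i+1"] iS m le p by auto
        ultimately show ?thesis by (simp add: add.assoc)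
      qed
      then show "(p, p + 2 * Suc t) \<in> ?R\<^sup>*" using prev by (simp add: add.assoc)
    qed
  qed
  have clsR: "(p, v) \<in> ?R\<^sup>*" if "v \<in> Cls n p" for v
  proof -
    have vv: "v \<ge> 1" "v \<le> n" "v mod 2 = p mod 2" using that by (auto simp: Cls_def)
    then have "v \<ge> p" using p by presburger
    have "2 dvd v - p" using mod_eq_dvd_iff_nat[OF \<open>p \<le> v\<close>] vv by simp
    then obtain t where "v - p = 2*t" unfolding dvd_def by blast
    then have "v = p + 2*t" using \<open>p \<le> v\<close> by simp
    then show ?thesis using chain[of t] \<open>v \<le> n\<close> by simp
  qed
  have "(p, v) \<in> ?R\<^sup>*" if v: "v \<in> ?S" for v
  proof (cases "v \<in> Cls n p")
    case True then show ?thesis using clsR by blast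
  next
    case False
    have vr: "v \<in> {1..n}" using v X Bset_sub[of n F] by (auto simp: Cls_def)
    show ?thesis
    proof (cases "v = 1")
      case True
      then have "p = 2" using False p n5 by (auto simp: Cls_def)
      then have c2: "2 \<in> Cls n p" using n5 by (auto simp: Cls_def)
      have a: "1 \<in> ?S" using v True by auto
      have b: "1+1 \<in> ?S" using c2 unfolding one_add_one by blast
      have "(1+1, 1) \<in> ?R\<^sup>*" by (rule cyc(2)[OF _ _ a b]) (use n5 in auto)
      then show ?thesis using clsR[OF c2] True by (metis one_add_one rtrancl_trans)
    next
      case v1: False
      then have w: "v - 1 \<in> Cls n p" using False vr p by (auto simp: Cls_def; presburger)
      have "(v - 1 + 1, v - 1) \<in> ?R\<^sup>*" using cyc(2)[of "v-1"] v w vr v1 by auto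
      then have "(v, v - 1) \<in> ?R\<^sup>*" using vr v1 by simp
      then have "(v - 1, v) \<in> ?R\<^sup>*" using sym_rtrancl[OF sym_Rel] by (meson symD)
      then show ?thesis using clsR[OF w] by (rule rtrancl_trans[rotated])
    qed
  qed
  then show ?thesis by (intro conn_from_root[OF pS]) blast
qed


definition Tset :: "nat \<Rightarrow> nat \<Rightarrow> (nat \<Rightarrow> nat \<Rightarrow> real) \<Rightarrow> nat \<Rightarrow> nat \<Rightarrow> nat set" where
  "Tset n N AC p r = (\<lambda>c. 2*c + 1 - p) ` {c \<in> {1..N}. 2*c + 1 - p \<le> n \<and> AC r c = 1}"

lemma Tset_sub: "Tset n N AC p r \<subseteq> {1..n}" if "p = 1 \<or> p = 2"
  using that by (auto simp: Tset_def)

lemma Tset_Cls: "p = 1 \<or> p = 2 \<Longrightarrow> Tset n N AC p r \<inter> Cls n p = {}"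
  by (auto simp: Tset_def Cls_def)

lemma phi_inj: "p = 1 \<or> p = 2 \<Longrightarrow> inj_on (\<lambda>c::nat. 2*c + 1 - p) {1..N}"
  by (auto simp: inj_on_def)

lemma recover:
  assumes p: "p = 1 \<or> p = 2" and Z: "zero_one_matrix mC N AC" and I: "identifies mC N k AC"
    and v1: "is_vec n x1" and v2: "is_vec n x2" and s1: "sparse n k x1" and s2: "sparse n k x2"
    and B: "B \<subseteq> {1..n}" and xB: "\<forall>b\<in>B. x1 b = x2 b"
    and W: "sum x1 (Cls n p \<union> B) = sum x2 (Cls n p \<union> B)"
    and R: "\<forall>r<mC. sum x1 (Tset n N AC p r \<union> (Cls n p \<union> B)) = sum x2 (Tset n N AC p r \<union> (Cls n p \<union> B))"
    and c: "c \<in> {1..N}" "2*c + 1 - p \<le> n"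
  shows "x1 (2*c + 1 - p) = x2 (2*c + 1 - p)"
proof -
  define \<phi> where "\<phi> = (\<lambda>c::nat. 2*c + 1 - p)"
  have finB: "finite B" using B finite_subset by blast
  have finC: "finite (Cls n p)" by (simp add: Cls_def)
  have finT: "\<And>r. finite (Tset n N AC p r)" by (simp add: Tset_def)
  have Tsum: "sum x1 (Tset n N AC p r) = sum x2 (Tset n N AC p r)" if r: "r < mC" for r
  proof -
    let ?T = "Tset n N AC p r" and ?W = "Cls n p \<union> B"
    have int: "?T \<inter> ?W = ?T \<inter> B" using Tset_Cls[OF p, of n N AC r] by blast
    have u1: "sum x1 (?T \<union> ?W) + sum x1 (?T \<inter> ?W) = sum x1 ?T + sum x1 ?W"
      by (rule sum.union_inter) (use finT finB finC in auto)
    have u2: "sum x2 (?T \<union> ?W) + sum x2 (?T \<inter> ?W) = sum x2 ?T + sum x2 ?W"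
      by (rule sum.union_inter) (use finT finB finC in auto)
    have "sum x1 (?T \<inter> B) = sum x2 (?T \<inter> B)" using xB by (intro sum.cong) auto
    moreover have "sum x1 (?T \<union> ?W) = sum x2 (?T \<union> ?W)" using R r by blast
    ultimately show ?thesis using u1[unfolded int] u2[unfolded int] W by linarith
  qed
  define y1 where "y1 = (\<lambda>c. if c \<in> {1..N} \<and> \<phi> c \<le> n then x1 (\<phi> c) else 0)"
  define y2 where "y2 = (\<lambda>c. if c \<in> {1..N} \<and> \<phi> c \<le> n then x2 (\<phi> c) else 0)"
  have inj: "inj_on \<phi> {1..N}" unfolding \<phi>_def by (rule phi_inj[OF p])
  have mv: "mat_vec N AC (\<lambda>c. if c \<in> {1..N} \<and> \<phi> c \<le> n then w (\<phi> c) else 0) r = sum w (Tset n N AC p r)"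
    if r: "r < mC" for r and w :: "nat \<Rightarrow> real"
  proof -
    have "mat_vec N AC (\<lambda>c. if c \<in> {1..N} \<and> \<phi> c \<le> n then w (\<phi> c) else 0) r
        = (\<Sum>c\<in>{1..N}. if \<phi> c \<le> n \<and> AC r c = 1 then w (\<phi> c) else 0)"
      unfolding mat_vec_def
    proof (rule sum.cong)
      fix c assume "c \<in> {1..N}"
      then have "AC r c \<in> {0,1}" using Z r by (auto simp: zero_one_matrix_def)
      then show "AC r c * (if c \<in> {1..N} \<and> \<phi> c \<le> n then w (\<phi> c) else 0)
          = (if \<phi> c \<le> n \<and> AC r c = 1 then w (\<phi> c) else 0)" using \<open>c \<in> {1..N}\<close> by auto
    qed simp
    also have "\<dots> = sum (\<lambda>c. w (\<phi> c)) {c \<in> {1..N}. \<phi> c \<le> n \<and> AC r c = 1}"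
      by (rule sum.inter_filter[symmetric]) simp
    also have "\<dots> = sum w (\<phi> ` {c \<in> {1..N}. \<phi> c \<le> n \<and> AC r c = 1})"
      by (rule sum.reindex_cong[symmetric, where l=\<phi>]) (auto intro: inj_on_subset[OF inj])
    also have "\<dots> = sum w (Tset n N AC p r)" by (simp add: Tset_def \<phi>_def)
    finally show ?thesis .
  qed
  have spy: "sparse N k (\<lambda>c. if c \<in> {1..N} \<and> \<phi> c \<le> n then w (\<phi> c) else 0)"
    if sx: "sparse n k w" for w :: "nat \<Rightarrow> real"
  proof -
    let ?Y = "{c \<in> {1..N}. (if c \<in> {1..N} \<and> \<phi> c \<le> n then w (\<phi> c) else 0) \<noteq> 0}"
    have "card ?Y \<le> card {j \<in> {1..n}. w j \<noteq> 0}"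
    proof (rule card_inj_on_le[of \<phi>])
      show "inj_on \<phi> ?Y" by (rule inj_on_subset[OF inj]) auto
      show "\<phi> ` ?Y \<subseteq> {j \<in> {1..n}. w j \<noteq> 0}" using p by (auto simp: \<phi>_def split: if_splits)
    qed simp
    then show ?thesis using sx by (simp add: sparse_def)
  qed
  have vy: "is_vec N (\<lambda>c. if c \<in> {1..N} \<and> \<phi> c \<le> n then w (\<phi> c) else 0)" for w :: "nat \<Rightarrow> real"
    by (simp add: is_vec_def)
  have "y1 = y2"
  proof (rule ccontr)
    assume ne: "y1 \<noteq> y2"
    obtain r where r: "r < mC" "mat_vec N AC y1 r \<noteq> mat_vec N AC y2 r"
      using I ne vy spy[OF s1] spy[OF s2] unfolding identifies_def y1_def y2_def by blast
    show False using r mv[of r x1] mv[of r x2] Tsum[of r] by (simp add: y1_def y2_def)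
  qed
  then have "y1 c = y2 c" by simp
  then show ?thesis using c by (simp add: y1_def y2_def \<phi>_def)
qed


lemma mat_vec_rows:
  assumes "rows ! r \<subseteq> {1..n}"
  shows "mat_vec n (\<lambda>r j. if j \<in> rows ! r then 1 else 0) x r = sum x (rows ! r)"
proof -
  have "mat_vec n (\<lambda>r j. if j \<in> rows ! r then 1 else 0) x r = (\<Sum>j\<in>{1..n}. if j \<in> rows ! r then x j else 0)"
    unfolding mat_vec_def by (rule sum.cong) auto
  also have "\<dots> = sum x ({1..n} \<inter> rows ! r)" by (rule sum.inter_restrict[symmetric]) simp
  also have "{1..n} \<inter> rows ! r = rows ! r" using assms by auto
  finally show ?thesis .
qed

lemma upper:
  assumes n5: "n \<ge> 5" and FS: "F \<subseteq> skip2_links n" and Z: "zero_one_matrix mC N AC"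
    and I: "identifies mC N k AC" and N1: "2*N \<le> n+1" and N2: "n \<le> 2*N"
  shows "\<exists>A. measurement_matrix (G4 n - F) (2*mC + 2 + card (Bset n F)) n A
      \<and> identifies (2*mC + 2 + card (Bset n F)) n k A"
proof -
  define B where "B = Bset n F"
  define rows where "rows = map (\<lambda>r. Tset n N AC 2 r \<union> (Cls n 2 \<union> B)) [0..<mC]
     @ map (\<lambda>r. Tset n N AC 1 r \<union> (Cls n 1 \<union> B)) [0..<mC]
     @ [Cls n 2 \<union> B, Cls n 1 \<union> B] @ map (\<lambda>b. {b}) (sorted_list_of_set B)"
  have finB: "finite B" unfolding B_def using Bset_sub finite_subset by blast
  have len: "length rows = 2*mC + 2 + card (Bset n F)"
    using finB by (simp add: rows_def B_def)
  define A where "A = (\<lambda>r j. if j \<in> rows ! r then (1::real) else 0)"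
  have Bsub: "B \<subseteq> {1..n}" unfolding B_def by (rule Bset_sub)
  have T12: "Tset n N AC 1 r \<subseteq> {1..n}" "Tset n N AC 2 r \<subseteq> {1..n}" for r
    using Tset_sub by auto
  have cases_rows: "(\<exists>r. S = Tset n N AC 2 r \<union> (Cls n 2 \<union> B)) \<or> (\<exists>r. S = Tset n N AC 1 r \<union> (Cls n 1 \<union> B))
     \<or> S = Cls n 2 \<union> B \<or> S = Cls n 1 \<union> B \<or> (\<exists>b\<in>B. S = {b})" if "S \<in> set rows" for S
    using that finB unfolding rows_def by auto
  have sub: "S \<subseteq> {1..n}" if "S \<in> set rows" for S
  proof -
    have "Cls n p \<subseteq> {1..n}" for p by (auto simp: Cls_def)
    then show ?thesis using cases_rows[OF that] Bsub T12 by blast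
  qed
  have conn: "induces_connected (G4 n - F) S" if "S \<in> set rows" for S
  proof -
    have c1: "induces_connected (G4 n - F) (Cls n p \<union> B \<union> X)" if "p = 1 \<or> p = 2" "X \<subseteq> {1..n}" for p X
      unfolding B_def by (rule conn_class[OF n5 FS that])
    have c2: "induces_connected (G4 n - F) {b}" for b
      by (auto simp: induces_connected_def)
    from \<open>S \<in> set rows\<close> consider (a) r where "S = Tset n N AC 2 r \<union> (Cls n 2 \<union> B)"
      | (b) r where "S = Tset n N AC 1 r \<union> (Cls n 1 \<union> B)" | (c) "S = Cls n 2 \<union> B" | (d) "S = Cls n 1 \<union> B"
      | (e) b where "S = {b}"
      unfolding rows_def by auto
    then show ?thesis
    proof cases
      case a then show ?thesis using c1[of 2 "Tset n N AC 2 r"] T12 by (simp add: Un_ac)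
    next
      case b then show ?thesis using c1[of 1 "Tset n N AC 1 r"] T12 by (simp add: Un_ac)
    next
      case c then show ?thesis using c1[of 2 "{}"] by simp
    next
      case d then show ?thesis using c1[of 1 "{}"] by simp
    next
      case e then show ?thesis using c2 by simp
    qed
  qed
  have rs: "row_support n A r = rows ! r" if "r < length rows" for r
    using sub[OF nth_mem[OF that]] by (auto simp: row_support_def A_def)
  have MM: "measurement_matrix (G4 n - F) (length rows) n A"
    unfolding measurement_matrix_def zero_one_matrix_def
    using rs conn nth_mem by (auto simp: A_def)
  have ID: "identifies (length rows) n k A"
    unfolding identifies_def
  proof (intro allI impI)
    fix x1 x2 :: "nat \<Rightarrow> real"
    assume H: "is_vec n x1 \<and> is_vec n x2 \<and> sparse n k x1 \<and> sparse n k x2 \<and> x1 \<noteq> x2"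
    show "\<exists>r<length rows. mat_vec n A x1 r \<noteq> mat_vec n A x2 r"
    proof (rule ccontr)
      assume "\<not> ?thesis"
      then have eqr: "\<forall>r<length rows. mat_vec n A x1 r = mat_vec n A x2 r" by auto
      have eqS: "sum x1 S = sum x2 S" if "S \<in> set rows" for S
      proof -
        obtain r where r: "r < length rows" "S = rows ! r" using \<open>S \<in> set rows\<close> by (auto simp: in_set_conv_nth)
        have s: "rows ! r \<subseteq> {1..n}" using sub that r by simp
        have "sum x1 (rows ! r) = mat_vec n A x1 r" "sum x2 (rows ! r) = mat_vec n A x2 r"
          unfolding A_def using mat_vec_rows[OF s] by auto
        then show ?thesis using eqr r by simp
      qed
      have xB: "\<forall>b\<in>B. x1 b = x2 b"
      proof
        fix b assume "b \<in> B"
        then have "{b} \<in> set rows" using finB by (auto simp: rows_def)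
        then show "x1 b = x2 b" using eqS by fastforce
      qed
      have W: "sum x1 (Cls n p \<union> B) = sum x2 (Cls n p \<union> B)" if "p = 1 \<or> p = 2" for p
      proof -
        have "Cls n p \<union> B \<in> set rows" using that unfolding rows_def by auto
        then show ?thesis by (rule eqS)
      qed
      have R: "\<forall>r<mC. sum x1 (Tset n N AC p r \<union> (Cls n p \<union> B)) = sum x2 (Tset n N AC p r \<union> (Cls n p \<union> B))"
        if "p = 1 \<or> p = 2" for p
      proof (intro allI impI)
        fix r assume "r < mC"
        then have "Tset n N AC p r \<union> (Cls n p \<union> B) \<in> set rows" using that unfolding rows_def by auto
        then show "sum x1 (Tset n N AC p r \<union> (Cls n p \<union> B)) = sum x2 (Tset n N AC p r \<union> (Cls n p \<union> B))"
          by (rule eqS)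
      qed
      have rec: "x1 (2*c + 1 - p) = x2 (2*c + 1 - p)"
        if "p = 1 \<or> p = 2" "c \<in> {1..N}" "2*c + 1 - p \<le> n" for p c
        using recover[OF that(1) Z I _ _ _ _ Bsub xB W[OF that(1)] R[OF that(1)] that(2,3)] H by blast
      have "x1 = x2"
      proof
        fix j
        show "x1 j = x2 j"
        proof (cases "j \<in> {1..n}")
          case False then show ?thesis using H by (simp add: is_vec_def)
        next
          case True
          show ?thesis
          proof (cases "odd j")
            case od: True
            from od obtain q where q: "j = 2*q + 1" by (auto elim: oddE)
            define c where "c = q + 1"
            have "2*c + 1 - 2 = j" "c \<in> {1..N}" using q True N1 N2 by (auto simp: c_def)
            then show ?thesis using rec[of 2 c] True by auto
          next
            case ev: False
            from ev obtain q where q: "j = 2*q" by (auto elim: evenE)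
            define c where "c = q"
            have "2*c + 1 - 1 = j" "c \<in> {1..N}" using q True N1 N2 by (auto simp: c_def)
            then show ?thesis using rec[of 1 c] True by auto
          qed
        qed
      qed
      then show False using H by simp
    qed
  qed
  show ?thesis using MM ID len by auto
qed


lemma N_facts:
  fixes n :: nat
  shows "2 * nat \<lceil>real n / 2\<rceil> \<le> n + 1 \<and> n \<le> 2 * nat \<lceil>real n / 2\<rceil>"
proof -
  obtain q where q: "n = 2*q \<or> n = 2*q + 1" by (metis oddE evenE)
  then have "\<lceil>real n / 2\<rceil> = int ((n+1) div 2)"
  proof
    assume "n = 2*q"
    then have "real n / 2 = real q" "(n+1) div 2 = q" by simp_all
    then show ?thesis by simp
  next
    assume h: "n = 2*q + 1"
    then have "(n+1) div 2 = q + 1" by simp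
    moreover have "\<lceil>real n / 2\<rceil> = int q + 1"
      by (rule ceiling_unique) (use h in auto)
    ultimately show ?thesis by simp
  qed
  then have "nat \<lceil>real n / 2\<rceil> = (n+1) div 2" by simp
  then show ?thesis using q by auto
qed

lemma ident_exists: "\<exists>A. zero_one_matrix N N A \<and> identifies N N k A"
proof -
  define A where "A = (\<lambda>(r::nat) (j::nat). if j = r + 1 then (1::real) else 0)"
  have "zero_one_matrix N N A" by (simp add: zero_one_matrix_def A_def)
  moreover have "identifies N N k A"
    unfolding identifies_def
  proof (intro allI impI)
    fix x1 x2 :: "nat \<Rightarrow> real"
    assume H: "is_vec N x1 \<and> is_vec N x2 \<and> sparse N k x1 \<and> sparse N k x2 \<and> x1 \<noteq> x2"
    then obtain j where j: "x1 j \<noteq> x2 j" by auto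
    then have jr: "j \<in> {1..N}" using H by (auto simp: is_vec_def)
    have mv: "mat_vec N A x (j - 1) = x j" for x :: "nat \<Rightarrow> real"
    proof -
      have "mat_vec N A x (j - 1) = (\<Sum>i\<in>{1..N}. if i = j then x i else 0)"
        unfolding mat_vec_def A_def using jr by (intro sum.cong) auto
      also have "\<dots> = x j" using jr by simp
      finally show ?thesis .
    qed
    show "\<exists>r<N. mat_vec N A x1 r \<noteq> mat_vec N A x2 r"
      using jr j mv by (intro exI[of _ "j - 1"]) auto
  qed
  ultimately show ?thesis by blast
qed

theorem theorem4:
  fixes n k h :: nat and F :: "nat set set"
  assumes "n \<ge> 5" and "k \<ge> 1" and "h \<le> n"
    and "F \<subseteq> skip2_links n" and "card F = h"
  shows "\<lceil>real h / 2\<rceil> \<le> int (M_graph (G4 n - F) k n)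
    \<and> M_graph (G4 n - F) k n \<le> 2 * M_C k (nat \<lceil>real n / 2\<rceil>) + h + 2"
proof -
  define N where "N = nat \<lceil>real n / 2\<rceil>"
  have N12: "2*N \<le> n+1" "n \<le> 2*N" using N_facts[of n] by (simp_all add: N_def)
  define mC where "mC = M_C k N"
  have "\<exists>A. zero_one_matrix mC N A \<and> identifies mC N k A"
    unfolding mC_def M_C_def by (rule LeastI_ex) (use ident_exists[of N k] in blast)
  then obtain AC where AC: "zero_one_matrix mC N AC" "identifies mC N k AC" by blast
  define m0 where "m0 = 2*mC + 2 + card (Bset n F)"
  have ex: "\<exists>A. measurement_matrix (G4 n - F) m0 n A \<and> identifies m0 n k A"
    unfolding m0_def by (rule upper[OF assms(1) assms(4) AC N12])
  have finF: "finite F"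
  proof (rule finite_subset[OF assms(4)])
    show "finite (skip2_links n)" using skip_eq[of n] assms(1) by simp
  qed
  have cB: "card (Bset n F) \<le> h" using card_Bset[OF finF] assms(5) by simp
  have le: "M_graph (G4 n - F) k n \<le> m0"
    unfolding M_graph_def by (rule Least_le) (use ex in blast)
  have "\<exists>A. measurement_matrix (G4 n - F) (M_graph (G4 n - F) k n) n A \<and> identifies (M_graph (G4 n - F) k n) n k A"
    unfolding M_graph_def by (rule LeastI_ex) (use ex in blast)
  then obtain A where A: "measurement_matrix (G4 n - F) (M_graph (G4 n - F) k n) n A"
    "identifies (M_graph (G4 n - F) k n) n k A" by blast
  have hm: "h \<le> 2 * M_graph (G4 n - F) k n"
    by (rule lower[OF assms(1) assms(2) assms(4) assms(5) A])
  have "\<lceil>real h / 2\<rceil> \<le> int (M_graph (G4 n - F) k n)"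
    unfolding ceiling_le_iff using hm by simp
  moreover have "M_graph (G4 n - F) k n \<le> 2 * M_C k (nat \<lceil>real n / 2\<rceil>) + h + 2"
    using le cB by (simp add: m0_def mC_def N_def)
  ultimately show ?thesis by simp
qed

end
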